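(* Let $B$ be a C*-algebra and $A\subseteq B$ a closed *-subalgebra satisfying the ideal intersection property relative to $B$. Let $J$ be a closed two-sided ideal of $B$. Then $$\mathrm{Ann}_B(\langle J\cap A\rangle_B)=\mathrm{Ann}_B(J).$$
   Context: $\langle S\rangle_B=[BSB]$ denotes the closed two-sided ideal of $B$ generated by $S\subseteq B$, where $[\cdot]$ is closed linear span. For a closed two-sided ideal $K$ of $B$, $\mathrm{Ann}_B(K)=\{x\in B: xk=0\ \forall k\in K\}$ (which equals $\{x\in B: kx=0\ \forall k\in K\}$). $A$ satisfies the ideal intersection property relative to $B$ if $J\cap A\neq\{0\}$ for every nonzero closed two-sided ideal $J$ of $B$. *)

theory Defs
  imports "HOL-Analysis.Analysis"
begin

class cstar_algebra = real_normed_algebra + banach +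
  fixes scaleC :: "complex \<Rightarrow> 'a \<Rightarrow> 'a"
    and cstar :: "'a \<Rightarrow> 'a"
  assumes scaleC_add_left: "scaleC (a + b) x = scaleC a x + scaleC b x"
    and scaleC_add_right: "scaleC a (x + y) = scaleC a x + scaleC a y"
    and scaleC_scaleC: "scaleC a (scaleC b x) = scaleC (a * b) x"
    and scaleC_one: "scaleC 1 x = x"
    and scaleR_scaleC: "scaleR r x = scaleC (complex_of_real r) x"
    and norm_scaleC: "norm (scaleC a x) = cmod a * norm x"
    and mult_scaleC_left: "scaleC a x * y = scaleC a (x * y)"
    and mult_scaleC_right: "x * scaleC a y = scaleC a (x * y)"
    and cstar_cstar: "cstar (cstar x) = x"
    and cstar_add: "cstar (x + y) = cstar x + cstar y"
    and cstar_scaleC: "cstar (scaleC a x) = scaleC (cnj a) (cstar x)"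
    and cstar_mult: "cstar (x * y) = cstar y * cstar x"
    and cstar_identity: "norm (cstar x * x) = (norm x)\<^sup>2"

definition cspan :: "'a::cstar_algebra set \<Rightarrow> 'a set" where
  "cspan S = {x. \<exists>F c. finite F \<and> F \<subseteq> S \<and> x = (\<Sum>v\<in>F. scaleC (c v) v)}"

definition csubspace :: "'a::cstar_algebra set \<Rightarrow> bool" where
  "csubspace S \<longleftrightarrow> 0 \<in> S \<and> (\<forall>x\<in>S. \<forall>y\<in>S. x + y \<in> S) \<and> (\<forall>a. \<forall>x\<in>S. scaleC a x \<in> S)"

definition closed_star_subalgebra :: "'a::cstar_algebra set \<Rightarrow> bool" where
  "closed_star_subalgebra A \<longleftrightarrow> closed A \<and> csubspace A \<and>
     (\<forall>x\<in>A. \<forall>y\<in>A. x * y \<in> A) \<and> (\<forall>x\<in>A. cstar x \<in> A)"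

definition closed_ideal :: "'a::cstar_algebra set \<Rightarrow> bool" where
  "closed_ideal J \<longleftrightarrow> closed J \<and> csubspace J \<and>
     (\<forall>b. \<forall>x\<in>J. b * x \<in> J \<and> x * b \<in> J)"

definition gen_ideal :: "'a::cstar_algebra set \<Rightarrow> 'a set" where
  "gen_ideal S = closure (cspan {b * s * c | b s c. s \<in> S})"

definition Ann :: "'a::cstar_algebra set \<Rightarrow> 'a set" where
  "Ann K = {x. \<forall>k\<in>K. x * k = 0}"

definition ideal_intersection_property :: "'a::cstar_algebra set \<Rightarrow> bool" where
  "ideal_intersection_property A \<longleftrightarrow>
     (\<forall>J. closed_ideal J \<and> J \<noteq> {0} \<longrightarrow> J \<inter> A \<noteq> {0})"

end

theory Submission
  imports Defs
begin

lemma csub_sum: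
  assumes "csubspace S" "finite F" "F \<subseteq> S"
  shows "(\<Sum>v\<in>F. scaleC (c v) v) \<in> S"
  using assms(2,3)
proof (induction F rule: finite_induct)
  case empty then show ?case using assms(1) by (simp add: csubspace_def)
next
  case (insert x F)
  then show ?case using assms(1) by (simp add: csubspace_def)
qed

lemma cspan_sub: "csubspace S \<Longrightarrow> G \<subseteq> S \<Longrightarrow> cspan G \<subseteq> S"
  unfolding cspan_def using csub_sum by blast

lemma gen_in: "s \<in> S \<Longrightarrow> b * s * c \<in> gen_ideal S"
proof -
  assume s: "s \<in> S"
  have "b * s * c = (\<Sum>v\<in>{b * s * c}. scaleC 1 v)" by (simp add: scaleC_one)
  hence "b * s * c \<in> cspan {b * s * c | b s c. s \<in> S}"
    unfolding cspan_def using s by (intro CollectI exI[of _ "{b * s * c}"] exI[of _ "\<lambda>_. 1"]) auto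
  thus ?thesis unfolding gen_ideal_def using closure_subset by blast
qed

lemma cstar_zero_imp: "(x::'a::cstar_algebra) * cstar x * x * cstar x = 0 \<Longrightarrow> x = 0"
proof -
  assume h: "x * cstar x * x * cstar x = 0"
  define p where "p = x * cstar x"
  have cp: "cstar p = p" unfolding p_def by (simp add: cstar_mult cstar_cstar)
  have "norm (cstar p * p) = (norm p)\<^sup>2" by (rule cstar_identity)
  moreover have "cstar p * p = 0" using h cp unfolding p_def by (simp add: mult.assoc)
  ultimately have "p = 0" by simp
  have "norm (cstar (cstar x) * cstar x) = (norm (cstar x))\<^sup>2" by (rule cstar_identity)
  hence "cstar x = 0" using \<open>p = 0\<close> unfolding p_def by (simp add: cstar_cstar)
  have "norm (cstar x * x) = (norm x)\<^sup>2" by (rule cstar_identity)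
  thus "x = 0" using \<open>cstar x = 0\<close> by simp
qed

theorem lemma3p2:
  fixes A J :: "'a::cstar_algebra set"
  assumes "closed_star_subalgebra A"
    and "ideal_intersection_property A"
    and "closed_ideal J"
  shows "Ann (gen_ideal (J \<inter> A)) = Ann J"
proof
  have JJ: "closed J" "csubspace J" "\<And>b x. x \<in> J \<Longrightarrow> b * x \<in> J \<and> x * b \<in> J"
    using assms(3) unfolding closed_ideal_def by auto
  have KJ: "gen_ideal (J \<inter> A) \<subseteq> J"
  proof -
    have "{b * s * c | b s c. s \<in> J \<inter> A} \<subseteq> J" using JJ(3) by blast
    hence "cspan {b * s * c | b s c. s \<in> J \<inter> A} \<subseteq> J" using cspan_sub JJ(2) by blast
    thus ?thesis unfolding gen_ideal_def using closure_minimal JJ(1) by blast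
  qed
  show "Ann J \<subseteq> Ann (gen_ideal (J \<inter> A))" using KJ unfolding Ann_def by blast
  show "Ann (gen_ideal (J \<inter> A)) \<subseteq> Ann J"
  proof
    fix x assume x: "x \<in> Ann (gen_ideal (J \<inter> A))"
    define M where "M = {y. \<forall>b c. \<forall>s\<in>J \<inter> A. y * b * s * c = 0}"
    have xM: "x \<in> M" unfolding M_def
    proof (intro CollectI allI ballI)
      fix b c s assume s: "s \<in> J \<inter> A"
      have "b * s * c \<in> gen_ideal (J \<inter> A)" using gen_in[OF s] .
      hence "x * (b * s * c) = 0" using x unfolding Ann_def by blast
      thus "x * b * s * c = 0" by (simp add: mult.assoc)
    qed
    have Mcl: "closed M"
    proof -
      have "M = (\<Inter>b. \<Inter>c. \<Inter>s\<in>J \<inter> A. {y. y * b * s * c = 0})" unfolding M_def by blast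
      moreover have "closed {y. y * b * s * c = 0}" for b s c :: 'a
        by (intro closed_Collect_eq continuous_intros)
      ultimately show ?thesis by (simp add: closed_INT)
    qed
    have scz: "scaleC a (0::'a) = 0" for a
      using scaleC_add_right[of a "0::'a" 0] by simp
    have Msub: "csubspace M"
      unfolding csubspace_def M_def
      by (auto simp: distrib_right mult_scaleC_left scaleC_add_right scz)
    have Msub': "csubspace M" using Msub .
    define N where "N = M \<inter> J"
    have Nid: "closed_ideal N"
      unfolding closed_ideal_def N_def
    proof (intro conjI allI ballI)
      show "closed (M \<inter> J)" using Mcl JJ(1) by auto
      show "csubspace (M \<inter> J)" using Msub JJ(2) unfolding csubspace_def by auto
    next
      fix b y assume y: "y \<in> M \<inter> J"
      show "b * y \<in> M \<inter> J" using y JJ(3) unfolding M_def by (auto simp: mult.assoc)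
      have "\<forall>b' c. \<forall>s\<in>J \<inter> A. y * b * b' * s * c = 0"
      proof (intro allI ballI)
        fix b' c s assume "s \<in> J \<inter> A"
        hence "y * (b * b') * s * c = 0" using y unfolding M_def by blast
        thus "y * b * b' * s * c = 0" by (simp add: mult.assoc)
      qed
      thus "y * b \<in> M \<inter> J" using y JJ(3) unfolding M_def by blast
    qed
    have NA: "N \<inter> A \<subseteq> {0}"
    proof
      fix a assume a: "a \<in> N \<inter> A"
      hence "a * cstar a * a * cstar a = 0" unfolding N_def M_def by auto
      thus "a \<in> {0}" using cstar_zero_imp by auto
    qed
    have "N = {0}"
    proof (rule ccontr)
      assume "N \<noteq> {0}"
      hence "N \<inter> A \<noteq> {0}" using assms(2) Nid unfolding ideal_intersection_property_def by blast
      moreover have "0 \<in> N \<inter> A" using assms(1) Nid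
        unfolding closed_star_subalgebra_def closed_ideal_def csubspace_def by auto
      ultimately show False using NA by blast
    qed
    have "x * k = 0" if k: "k \<in> J" for k
    proof -
      have "\<forall>b' c. \<forall>s\<in>J \<inter> A. x * k * b' * s * c = 0"
      proof (intro allI ballI)
        fix b' c s assume "s \<in> J \<inter> A"
        hence "x * (k * b') * s * c = 0" using xM unfolding M_def by blast
        thus "x * k * b' * s * c = 0" by (simp add: mult.assoc)
      qed
      hence "x * k \<in> M" unfolding M_def by blast
      moreover have "x * k \<in> J" using JJ(3) k by blast
      ultimately show ?thesis using \<open>N = {0}\<close> unfolding N_def by blast
    qed
    thus "x \<in> Ann J" unfolding Ann_def by blast
  qed
qed

end
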